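(* For every $m\in\mathbb{N}_0$ and every complex $s=\sigma+it$ with $\sigma>1/2$, $$\sum_{n=0}^{+\infty}\binom{n+m}{n}\left|\ell_n^{(m)}\right|\left|\frac{1-s}{s}\right|^n\le\left(\frac{1}{m!}\int_1^{+\infty}\frac{\{x\}^2\log^m x}{x^2}\mathrm{d}x\right)^{1/2}\left(\frac{|s|}{\sqrt{2\sigma-1}}\right)^{m+1}<\infty .$$
   Context: $\{x\}=x-\lfloor x\rfloor$; $\ell_n^{(m)}=-\delta_{n,0}+\sum_{k=0}^n\binom{n}{k}(-1)^{n-k}\sum_{j=0}^{m+k}\frac{\gamma_j}{j!}$, where $\delta_{n,k}$ is the Kronecker delta and $\gamma_j=\lim_{N\to\infty}\left(\sum_{k=1}^N\frac{\log^j k}{k}-\frac{\log^{j+1}N}{j+1}\right)$ are the Stieltjes constants. *)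

theory Defs
  imports "HOL-Analysis.Analysis"
begin

definition stieltjes :: "nat \<Rightarrow> real" where
  "stieltjes j = lim (\<lambda>N::nat. (\<Sum>k=1..N. ln (real k) ^ j / real k)
                                 - ln (real N) ^ (Suc j) / real (Suc j))"

definition ell :: "nat \<Rightarrow> nat \<Rightarrow> real" where
  "ell m n = - (if n = 0 then 1 else 0)
     + (\<Sum>k=0..n. real (n choose k) * (-1) ^ (n - k)
          * (\<Sum>j=0..m+k. stieltjes j / fact j))"

end

theory Submission
  imports Defs
begin


primrec FF :: "nat \<Rightarrow> real \<Rightarrow> real" where
  "FF 0 x = - 1 / x"
| "FF (Suc p) x = - (ln x ^ (Suc p)) / x + real (Suc p) * FF p x"

lemma FF_deriv: "x > 0 \<Longrightarrow> (FF p has_real_derivative ln x ^ p / x^2) (at x)"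
proof (induction p)
  case 0
  then show ?case by (auto intro!: derivative_eq_intros simp: power2_eq_square)
next
  case (Suc p)
  have d1: "((\<lambda>x. ln x ^ (Suc p)) has_real_derivative real (Suc p) * ln x ^ p * (1/x)) (at x)"
    using DERIV_chain2[OF DERIV_pow[of "Suc p"] DERIV_ln[OF Suc.prems]]
    by (simp add: divide_inverse del: power_Suc)
  have e: "FF (Suc p) = (\<lambda>x. - (ln x ^ (Suc p) / x) + real (Suc p) * FF p x)"
    by (rule ext) simp
  have "(FF (Suc p) has_real_derivative
     (- ((real (Suc p) * ln x ^ p * (1/x) * x - ln x ^ (Suc p) * 1) / (x * x)) + real (Suc p) * (ln x ^ p / x^2))) (at x)"
    unfolding e
    by (intro DERIV_add DERIV_minus DERIV_divide d1 DERIV_ident DERIV_cmult Suc.IH Suc.prems)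
       (use Suc.prems in simp)
  then show ?case
    by (rule DERIV_cong) (use Suc.prems in \<open>simp add: field_simps power2_eq_square\<close>)
qed

lemma lnpow_over_x: "((\<lambda>x::real. ln x ^ p / x) \<longlongrightarrow> 0) at_top"
proof -
  have "((\<lambda>x::real. ln x ^ p / exp (ln x)) \<longlongrightarrow> 0) at_top"
    using filterlim_compose[OF tendsto_power_div_exp_0[of p] ln_at_top] by (simp only:)
  moreover have "eventually (\<lambda>x::real. ln x ^ p / exp (ln x) = ln x ^ p / x) at_top"
    using eventually_gt_at_top[of 0] by eventually_elim simp
  ultimately show ?thesis by (rule Lim_transform_eventually)
qed

lemma FF_lim: "((\<lambda>x. FF p x) \<longlongrightarrow> 0) at_top"
proof (induction p)
  case 0
  have "((\<lambda>x::real. - (ln x ^ 0 / x)) \<longlongrightarrow> - 0) at_top"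
    by (intro tendsto_intros lnpow_over_x)
  then show ?case by simp
next
  case (Suc p)
  have "((\<lambda>x. - (ln x ^ (Suc p) / x) + real (Suc p) * FF p x) \<longlongrightarrow> - 0 + real (Suc p) * 0) at_top"
    by (intro tendsto_intros lnpow_over_x Suc.IH)
  then show ?case by simp
qed

lemma FF_1: "FF p 1 = - fact p"
  by (induction p) auto

lemma wt_has_integral: "((\<lambda>x::real. ln x ^ p / x^2) has_integral fact p) {1..}"
proof (rule has_integral_to_inf)
  have ftc: "((\<lambda>x::real. ln x ^ p / x^2) has_integral (FF p y - FF p 1)) {1..y}" if "y \<ge> 1" for y
    using that by (intro fundamental_theorem_of_calculus)
      (auto intro!: has_field_derivative_at_within FF_deriv simp flip: has_real_derivative_iff_has_vector_derivative
         intro: DERIV_subset)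
  show "(\<lambda>x::real. ln x ^ p / x^2) integrable_on {1..y}" for y
    using ftc[of y] by (cases "y \<ge> 1") auto
  have "\<forall>\<^sub>F y in at_top. integral {1..y} (\<lambda>x::real. ln x ^ p / x^2) = FF p y - FF p 1"
    using eventually_ge_at_top[of 1] by eventually_elim (use ftc in blast)
  moreover have "((\<lambda>y. FF p y - FF p 1) \<longlongrightarrow> 0 - (- fact p)) at_top"
    by (intro tendsto_intros FF_lim) (simp add: FF_1)
  ultimately show "((\<lambda>y. integral {1..y} (\<lambda>x::real. ln x ^ p / x^2)) \<longlongrightarrow> fact p) at_top"
    by (simp add: filterlim_cong)
  show "ln y ^ p / y^2 \<ge> 0" if "y \<ge> 1" for y :: real using that by (intro divide_nonneg_nonneg zero_le_power) auto
qed



lemma Sdiff: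
  fixes F :: "nat \<Rightarrow> real"
  shows "(\<Sum>k\<le>Suc b. real (Suc b choose k) * (-1)^(Suc b - k) * F k)
       = (\<Sum>k\<le>b. real (b choose k) * (-1)^(b-k) * (F (Suc k) - F k))"
proof -
  define A where "A = (\<Sum>k\<le>b. real (b choose k) * (-1)^(b-k) * F (Suc k))"
  define B where "B = (\<Sum>k\<le>b. real (b choose k) * (-1)^(b-k) * F k)"
  define X where "X = (\<Sum>k\<le>b. real (b choose Suc k) * (-1)^(b-k) * F (Suc k))"
  have L: "(\<Sum>k\<le>Suc b. real (Suc b choose k) * (-1)^(Suc b - k) * F k) = (-1)^(Suc b) * F 0 + A + X"
    unfolding A_def X_def
    by (subst sum.atMost_Suc_shift) (simp add: sum.distrib algebra_simps del: power_Suc sum.atMost_Suc)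
  have XB: "X = - (B - (-1)^b * F 0)"
  proof (cases b)
    case 0
    then show ?thesis by (simp add: X_def B_def)
  next
    case (Suc b')
    have "X = (\<Sum>k\<le>b'. real (b choose Suc k) * (-1)^(b-k) * F (Suc k))"
      unfolding X_def using Suc by (simp add: sum.atMost_Suc binomial_eq_0)
    also have "\<dots> = - (\<Sum>k\<le>b'. real (b choose Suc k) * (-1)^(b'-k) * F (Suc k))"
      unfolding sum_negf[symmetric]
      by (intro sum.cong refl) (simp add: Suc Suc_diff_le)
    also have "(\<Sum>k\<le>b'. real (b choose Suc k) * (-1)^(b'-k) * F (Suc k)) = B - (-1)^b * F 0"
      unfolding B_def Suc sum.atMost_Suc_shift by (simp del: sum.atMost_Suc binomial_Suc_Suc power_Suc)
    finally show ?thesis .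
  qed
  show ?thesis using L XB unfolding A_def B_def
    by (simp add: sum_subtractf algebra_simps)
qed

lemma poch_diff: "pochhammer (x+1) (Suc n) - pochhammer x (Suc n) = real (Suc n) * pochhammer (x+1) n"
  by (simp only: pochhammer_rec[of x] pochhammer_rec'[of "x+1"]) (simp add: algebra_simps)

lemma K_poch:
  "i \<le> b \<Longrightarrow> (\<Sum>k\<le>b. real (b choose k) * (-1)^(b-k) * pochhammer (c + real k) i) = (if i = b then fact b else 0)"
proof (induction b arbitrary: i c)
  case 0
  then show ?case by simp
next
  case (Suc b)
  have "(\<Sum>k\<le>Suc b. real (Suc b choose k) * (-1)^(Suc b - k) * pochhammer (c + real k) i)
     = (\<Sum>k\<le>b. real (b choose k) * (-1)^(b-k) * (pochhammer (c + real (Suc k)) i - pochhammer (c + real k) i))"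
    by (rule Sdiff)
  also have "\<dots> = (if i = Suc b then fact (Suc b) else 0)"
  proof (cases i)
    case 0
    then show ?thesis by simp
  next
    case (Suc i')
    have "(\<Sum>k\<le>b. real (b choose k) * (-1)^(b-k) * (pochhammer (c + real (Suc k)) i - pochhammer (c + real k) i))
        = real i * (\<Sum>k\<le>b. real (b choose k) * (-1)^(b-k) * pochhammer ((c + 1) + real k) i')"
      unfolding sum_distrib_left
      using poch_diff[of "c + real _" i'] Suc by (intro sum.cong refl) (simp add: algebra_simps)
    also have "\<dots> = real i * (if i' = b then fact b else 0)"
      using Suc.IH[of i' "c+1"] \<open>i = Suc i'\<close> Suc.prems by simp
    also have "\<dots> = (if i = Suc b then fact (Suc b) else 0)"
      using \<open>i = Suc i'\<close> by simp
    finally show ?thesis .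
  qed
  finally show ?case .
qed



definition DD :: "nat \<Rightarrow> real \<Rightarrow> real" where
  "DD j x = (real j * ln x ^ (j - 1) - ln x ^ j) / x^2"

lemma dq: "x > 0 \<Longrightarrow> ((\<lambda>x. ln x ^ j / x) has_real_derivative DD j x) (at x)"
proof -
  assume x: "x > 0"
  have d1: "((\<lambda>x. ln x ^ j) has_real_derivative real j * ln x ^ (j - 1) * (1/x)) (at x)"
    using DERIV_chain2[OF DERIV_pow[of j] DERIV_ln[OF x]] by (simp add: divide_inverse)
  have "((\<lambda>x. ln x ^ j / x) has_real_derivative (real j * ln x ^ (j - 1) * (1/x) * x - ln x ^ j * 1) / (x * x)) (at x)"
    by (intro DERIV_divide d1 DERIV_ident) (use x in simp)
  then show ?thesis
    by (rule DERIV_cong) (use x in \<open>simp add: DD_def power2_eq_square field_simps\<close>)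
qed

lemma frac_meas: "(\<lambda>x::real. frac x) \<in> borel_measurable borel"
  unfolding frac_def by measurable

lemma bor_leb: "f \<in> borel_measurable borel \<Longrightarrow> (f::real\<Rightarrow>real) \<in> borel_measurable (lebesgue_on S)"
  by (simp add: measurable_completion measurable_restrict_space1)

lemma wt_integrable: "(\<lambda>x::real. ln x ^ p / x^2) integrable_on {1..}"
  using wt_has_integral by blast

lemma bounded_wt_integrable:
  assumes "g \<in> borel_measurable borel" "\<And>x. x \<ge> 1 \<Longrightarrow> \<bar>g x\<bar> \<le> 1"
  shows "(\<lambda>x::real. g x * (ln x ^ p / x^2)) integrable_on {1..}"
proof -
  have "(\<lambda>x::real. g x * (ln x ^ p / x^2)) absolutely_integrable_on {1..}"
  proof (rule measurable_bounded_by_integrable_imp_absolutely_integrable[OF _ _ wt_integrable])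
    show "(\<lambda>x::real. g x * (ln x ^ p / x^2)) \<in> borel_measurable (lebesgue_on {1..})"
      by (intro bor_leb) (use assms(1) in measurable)
    show "{1::real..} \<in> sets lebesgue" by simp
    fix x :: real assume "x \<in> {1..}"
    then have x: "x \<ge> 1" by simp
    have "norm (g x * (ln x ^ p / x^2)) = \<bar>g x\<bar> * (ln x ^ p / x^2)"
      using x by (simp add: abs_mult)
    also have "\<dots> \<le> 1 * (ln x ^ p / x^2)"
      using x assms(2)[OF x] by (intro mult_right_mono) auto
    finally show "norm (g x * (ln x ^ p / x^2)) \<le> ln x ^ p / x^2" by simp
  qed
  then show ?thesis using absolutely_integrable_on_def by blast
qed

lemma frac_wt_integrable: "(\<lambda>x::real. frac x * (ln x ^ p / x^2)) integrable_on {1..}"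
  by (rule bounded_wt_integrable[OF frac_meas]) (simp add: frac_lt_1 less_imp_le)

lemma frac2_wt_integrable: "(\<lambda>x::real. frac x ^ 2 * (ln x ^ p / x^2)) integrable_on {1..}"
proof (rule bounded_wt_integrable)
  show "(\<lambda>x::real. frac x ^ 2) \<in> borel_measurable borel" using frac_meas by measurable
  fix x :: real
  have "frac x ^ 2 \<le> 1 ^ 2" by (intro power_mono) (auto simp: frac_lt_1 less_imp_le)
  then show "\<bar>frac x ^ 2\<bar> \<le> 1" by simp
qed

definition aa :: "nat \<Rightarrow> nat \<Rightarrow> real" where
  "aa j N = (\<Sum>k=1..N. ln (real k) ^ j / real k) - ln (real N) ^ (Suc j) / real (Suc j)"

lemma piece:
  fixes N :: nat assumes N: "N \<ge> 1"
  shows "((\<lambda>x. frac x * DD j x) has_integral (aa j (Suc N) - aa j N)) {real N..real (Suc N)}"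
proof -
  define H where "H x = (x - real N) * (ln x ^ j / x) - ln x ^ (Suc j) / real (Suc j)" for x
  have dH: "(H has_real_derivative (x - real N) * DD j x) (at x)" if x: "x > 0" for x
  proof -
    have d1: "((\<lambda>x. ln x ^ (Suc j)) has_real_derivative real (Suc j) * ln x ^ j * (1/x)) (at x)"
      using DERIV_chain2[OF DERIV_pow[of "Suc j"] DERIV_ln[OF x]] by (simp add: divide_inverse del: power_Suc)
    have a: "((\<lambda>x. x - real N) has_real_derivative 1) (at x)"
      by (auto intro!: derivative_eq_intros)
    have "(H has_real_derivative (1 * (ln x ^ j / x) + DD j x * (x - real N)
           - real (Suc j) * ln x ^ j * (1/x) / real (Suc j))) (at x)"
      unfolding H_def[abs_def]
      by (rule DERIV_diff[OF DERIV_mult[OF a dq[OF x]] DERIV_cdivide[OF d1]])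
    then show ?thesis by (rule DERIV_cong) simp
  qed
  have "((\<lambda>x. (x - real N) * DD j x) has_integral (H (real (Suc N)) - H (real N))) {real N..real (Suc N)}"
    using N by (intro fundamental_theorem_of_calculus)
      (auto intro!: has_field_derivative_at_within dH simp flip: has_real_derivative_iff_has_vector_derivative)
  moreover have "H (real (Suc N)) - H (real N) = aa j (Suc N) - aa j N"
    unfolding H_def aa_def using N by (simp add: algebra_simps)
  ultimately have I: "((\<lambda>x. (x - real N) * DD j x) has_integral (aa j (Suc N) - aa j N)) {real N..real (Suc N)}"
    by simp
  show ?thesis
  proof (rule has_integral_spike_finite[OF _ _ I])
    show "finite {real (Suc N)}" by simp
    fix x assume x: "x \<in> {real N..real (Suc N)} - {real (Suc N)}"
    then have "floor x = int N" by (simp add: floor_eq_iff)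
    then show "frac x * DD j x = (x - real N) * DD j x" by (simp add: frac_def)
  qed
qed

lemma cum:
  fixes N :: nat assumes "N \<ge> 1"
  shows "((\<lambda>x. frac x * DD j x) has_integral (aa j N - (if j = 0 then 1 else 0))) {1..real N}"
  using assms
proof (induction N)
  case 0
  then show ?case by simp
next
  case (Suc N)
  show ?case
  proof (cases "N = 0")
    case True
    have "aa j 1 = (if j = 0 then 1 else 0)" by (simp add: aa_def)
    then show ?thesis using True has_integral_refl(2)[of "\<lambda>x. frac x * DD j x" 1] by simp
  next
    case False
    then have N: "N \<ge> 1" by simp
    have "((\<lambda>x. frac x * DD j x) has_integral
       ((aa j N - (if j = 0 then 1 else 0)) + (aa j (Suc N) - aa j N))) {1..real (Suc N)}"
      by (rule has_integral_combine[OF _ _ Suc.IH[OF N] piece[OF N]]) (use N in auto)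
    then show ?thesis by simp
  qed
qed

lemma fracDD_eq: "frac x * DD j x = real j * (frac x * (ln x ^ (j - 1) / x^2)) - frac x * (ln x ^ j / x^2)"
  by (simp add: DD_def algebra_simps diff_divide_distrib)

lemma fracDD_integrable: "(\<lambda>x. frac x * DD j x) integrable_on {1..}"
  unfolding fracDD_eq
  by (intro integrable_diff integrable_on_mult_right frac_wt_integrable)

definition II :: "nat \<Rightarrow> real" where
  "II j = integral {1..} (\<lambda>x. frac x * DD j x)"

lemma aa_lim: "aa j \<longlonglongrightarrow> (if j = 0 then 1 else 0) + II j"
proof -
  define h where "h x = frac x * DD j x" for x
  define B where "B x = real j * (ln x ^ (j - 1) / x^2) + ln x ^ j / x^2" for x :: real
  define f where "f k x = (if x \<in> {..real k} then h x else 0)" for k :: nat and x :: real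
  have fint: "(f k has_integral integral {1..real k} h) {1..}" for k
  proof -
    have "h integrable_on {1..real k}"
    proof (cases "k \<ge> 1")
      case True then show ?thesis using cum[OF True, of j] unfolding h_def by blast
    next
      case False then show ?thesis by (simp add: integrable_on_empty)
    qed
    then have "(h has_integral integral {1..real k} h) ({..real k} \<inter> {1..})"
      by (simp add: Int_commute atLeastAtMost_def integrable_integral)
    then show ?thesis unfolding f_def by (subst has_integral_restrict_Int)
  qed
  have Bint: "B integrable_on {1..}"
    unfolding B_def by (intro integrable_add integrable_on_mult_right wt_integrable)
  have bound: "norm (f k x) \<le> B x" if "x \<in> {1..}" for k x
  proof -
    from that have x: "x \<ge> 1" by simp
    have fr: "0 \<le> frac x" "frac x \<le> 1" by (auto simp: frac_lt_1 less_imp_le)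
    have w1: "0 \<le> ln x ^ (j - 1) / x^2" "0 \<le> ln x ^ j / x^2" using x by auto
    have "\<bar>h x\<bar> \<le> B x"
    proof -
      have "\<bar>h x\<bar> \<le> \<bar>real j * (frac x * (ln x ^ (j - 1) / x^2))\<bar> + \<bar>frac x * (ln x ^ j / x^2)\<bar>"
        unfolding h_def fracDD_eq by (rule abs_triangle_ineq4)
      also have "\<dots> \<le> real j * (ln x ^ (j - 1) / x^2) + ln x ^ j / x^2"
      proof (intro add_mono)
        have "frac x * (ln x ^ (j - 1) / x^2) \<le> ln x ^ (j - 1) / x^2"
          using fr w1 by (intro mult_left_le_one_le)
        moreover have "0 \<le> frac x * (ln x ^ (j - 1) / x^2)" using fr w1 by (intro mult_nonneg_nonneg)
        ultimately show "\<bar>real j * (frac x * (ln x ^ (j - 1) / x^2))\<bar> \<le> real j * (ln x ^ (j - 1) / x^2)"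
          by (metis abs_mult abs_of_nonneg mult_left_mono of_nat_0_le_iff)
        have "frac x * (ln x ^ j / x^2) \<le> ln x ^ j / x^2"
          using fr w1 by (intro mult_left_le_one_le)
        moreover have "0 \<le> frac x * (ln x ^ j / x^2)" using fr w1 by (intro mult_nonneg_nonneg)
        ultimately show "\<bar>frac x * (ln x ^ j / x^2)\<bar> \<le> ln x ^ j / x^2" by simp
      qed
      finally show ?thesis unfolding B_def .
    qed
    moreover have "0 \<le> B x" using w1 unfolding B_def by (intro add_nonneg_nonneg mult_nonneg_nonneg) auto
    ultimately show ?thesis unfolding f_def by auto
  qed
  have conv: "(\<lambda>k. f k x) \<longlonglongrightarrow> h x" for x
  proof -
    have "eventually (\<lambda>k. f k x = h x) sequentially"
      using eventually_ge_at_top[of "nat \<lceil>x\<rceil>"]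
    proof eventually_elim
      case (elim k)
      then have "x \<le> real k" by linarith
      then show ?case by (simp add: f_def)
    qed
    then show ?thesis by (simp add: tendsto_eventually)
  qed
  have "(\<lambda>k. integral {1..} (f k)) \<longlonglongrightarrow> integral {1..} h"
    by (rule dominated_convergence(2)[OF _ Bint bound conv]) (use fint in blast)
  moreover have "integral {1..} (f k) = integral {1..real k} h" for k
    using fint integral_unique by blast
  moreover have "integral {1..} h = II j" unfolding II_def h_def[abs_def] ..
  ultimately have L: "(\<lambda>k. integral {1..real k} h) \<longlonglongrightarrow> II j"
    by simp
  have "eventually (\<lambda>k. integral {1..real k} h = aa j k - (if j = 0 then 1 else 0)) sequentially"
    using eventually_ge_at_top[of 1]
  proof eventually_elim
    case (elim k)
    show ?case unfolding h_def[abs_def] by (rule integral_unique[OF cum[OF elim]])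
  qed
  with L have "(\<lambda>k. aa j k - (if j = 0 then 1 else 0)) \<longlonglongrightarrow> II j"
    by (rule Lim_transform_eventually)
  then have "(\<lambda>k. (aa j k - (if j = 0 then 1 else 0)) + (if j = 0 then 1 else 0)) \<longlonglongrightarrow> II j + (if j = 0 then 1 else 0)"
    by (intro tendsto_intros)
  then show ?thesis by (simp add: add.commute)
qed

lemma stieltjes_eq: "stieltjes j = (if j = 0 then 1 else 0) + II j"
proof -
  have "stieltjes j = lim (aa j)" unfolding stieltjes_def aa_def by simp
  then show ?thesis using aa_lim limI by metis
qed



definition EE :: "nat \<Rightarrow> real" where
  "EE p = integral {1..} (\<lambda>x. frac x * (ln x ^ p / x^2)) / fact p"

lemma II_div: "II j / fact j = (if j = 0 then - EE 0 else EE (j - 1) - EE j)"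
proof -
  define A where "A p = integral {1..} (\<lambda>x::real. frac x * (ln x ^ p / x^2))" for p
  have EA: "EE p = A p / fact p" for p unfolding EE_def A_def ..
  have "II j = real j * A (j - 1) - A j"
    unfolding II_def fracDD_eq A_def
    by (intro integral_unique has_integral_diff has_integral_mult_right integrable_integral frac_wt_integrable)
  then show ?thesis
  proof (cases j)
    case (Suc i)
    have "II j / fact j = (real (Suc i) * A i - A (Suc i)) / (real (Suc i) * fact i)"
      using \<open>II j = _\<close> Suc by (simp add: fact_Suc del: of_nat_Suc)
    also have "\<dots> = A i / fact i - A (Suc i) / (real (Suc i) * fact i)"
      by (simp add: diff_divide_distrib)
    finally show ?thesis using Suc by (simp add: EA fact_Suc del: of_nat_Suc)
  qed (simp add: EA)
qed

lemma stieltjes_partial: "(\<Sum>j\<le>M. stieltjes j / fact j) = 1 - EE M"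
proof (induction M)
  case 0
  then show ?case using II_div[of 0] by (simp add: stieltjes_eq)
next
  case (Suc M)
  have "stieltjes (Suc M) / fact (Suc M) = EE M - EE (Suc M)"
    using II_div[of "Suc M"] by (simp add: stieltjes_eq)
  then show ?case using Suc by simp
qed

lemma alt_sum: "(\<Sum>k\<le>n. real (n choose k) * (-1)^(n-k)) = (if n = 0 then 1 else 0)"
  using binomial_ring[of "1::real" "-1" n] by (cases n) simp_all

lemma ell_eq: "ell m n = - (\<Sum>k\<le>n. real (n choose k) * (-1)^(n-k) * EE (m + k))"
proof -
  have "ell m n = - (if n = 0 then 1 else 0) + (\<Sum>k\<le>n. real (n choose k) * (-1)^(n-k) * (1 - EE (m + k)))"
    unfolding ell_def atLeast0AtMost stieltjes_partial ..
  also have "\<dots> = - (if n = 0 then 1 else 0) + (\<Sum>k\<le>n. real (n choose k) * (-1)^(n-k))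
        - (\<Sum>k\<le>n. real (n choose k) * (-1)^(n-k) * EE (m + k))"
    by (simp add: algebra_simps sum_subtractf)
  finally show ?thesis by (simp add: alt_sum)
qed

definition qq :: "nat \<Rightarrow> nat \<Rightarrow> real \<Rightarrow> real" where
  "qq m n u = (\<Sum>k\<le>n. real (n choose k) * (-1)^(n-k) / fact (m + k) * u ^ k)"

lemma g_q: "((\<lambda>x. frac x * qq m n (ln x) * (ln x ^ m / x^2)) has_integral (- ell m n)) {1..}"
proof -
  have e: "(\<lambda>x. frac x * qq m n (ln x) * (ln x ^ m / x^2)) =
     (\<lambda>x. \<Sum>k\<le>n. real (n choose k) * (-1)^(n-k) / fact (m + k) * (frac x * (ln x ^ (m + k) / x^2)))"
    by (rule ext) (simp add: qq_def sum_distrib_left sum_distrib_right power_add algebra_simps)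
  have "((\<lambda>x. \<Sum>k\<le>n. real (n choose k) * (-1)^(n-k) / fact (m + k) * (frac x * (ln x ^ (m + k) / x^2)))
     has_integral (\<Sum>k\<le>n. real (n choose k) * (-1)^(n-k) / fact (m + k) *
        integral {1..} (\<lambda>x. frac x * (ln x ^ (m + k) / x^2)))) {1..}"
    by (intro has_integral_sum has_integral_mult_right integrable_integral frac_wt_integrable) auto
  moreover have "(\<Sum>k\<le>n. real (n choose k) * (-1)^(n-k) / fact (m + k) *
        integral {1..} (\<lambda>x. frac x * (ln x ^ (m + k) / x^2))) = - ell m n"
    unfolding ell_eq EE_def by simp
  ultimately show ?thesis unfolding e by simp
qed

lemma K_fact:
  assumes "i \<le> b"
  shows "(\<Sum>k\<le>b. real (b choose k) * (-1)^(b-k) / fact (m + k) * fact (m + i + k)) = (if i = b then fact b else 0)"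
proof -
  have "fact (m + i + k) / fact (m + k) = pochhammer ((real m + 1) + real k) i" for k
  proof -
    have "(fact (m + k + i) :: real) = fact (m + k) * pochhammer (1 + real (m + k)) i"
      using pochhammer_product'[of "1::real" "m + k" i] by (simp add: pochhammer_fact)
    then show ?thesis by (simp add: algebra_simps)
  qed
  then have "(\<Sum>k\<le>b. real (b choose k) * (-1)^(b-k) / fact (m + k) * fact (m + i + k))
     = (\<Sum>k\<le>b. real (b choose k) * (-1)^(b-k) * pochhammer ((real m + 1) + real k) i)"
    by (intro sum.cong refl) (metis (no_types, lifting) times_divide_eq_left times_divide_eq_right)
  also have "\<dots> = (if i = b then fact b else 0)" by (rule K_poch[OF assms])
  finally show ?thesis .
qed

lemma J_int:
  assumes "i \<le> b"
  shows "((\<lambda>x. ln x ^ i * qq m b (ln x) * (ln x ^ m / x^2)) has_integral (if i = b then fact b else 0)) {1..}"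
proof -
  have e: "(\<lambda>x. ln x ^ i * qq m b (ln x) * (ln x ^ m / x^2)) =
     (\<lambda>x. \<Sum>k\<le>b. real (b choose k) * (-1)^(b-k) / fact (m + k) * (ln x ^ (m + i + k) / x^2))"
    by (rule ext) (simp add: qq_def sum_distrib_left sum_distrib_right power_add algebra_simps)
  have "((\<lambda>x. \<Sum>k\<le>b. real (b choose k) * (-1)^(b-k) / fact (m + k) * (ln x ^ (m + i + k) / x^2))
     has_integral (\<Sum>k\<le>b. real (b choose k) * (-1)^(b-k) / fact (m + k) * fact (m + i + k))) {1..}"
    by (intro has_integral_sum has_integral_mult_right wt_has_integral) auto
  then show ?thesis unfolding e K_fact[OF assms] .
qed

lemma Q_orth_le:
  assumes "a \<le> b"
  shows "((\<lambda>x. qq m a (ln x) * qq m b (ln x) * (ln x ^ m / x^2)) has_integral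
           (if a = b then fact a / fact (m + a) else 0)) {1..}"
proof -
  have e: "(\<lambda>x. qq m a (ln x) * qq m b (ln x) * (ln x ^ m / x^2)) =
     (\<lambda>x. \<Sum>i\<le>a. real (a choose i) * (-1)^(a-i) / fact (m + i) * (ln x ^ i * qq m b (ln x) * (ln x ^ m / x^2)))"
    by (rule ext) (simp add: qq_def[of m a] sum_distrib_left sum_distrib_right algebra_simps)
  have "((\<lambda>x. \<Sum>i\<le>a. real (a choose i) * (-1)^(a-i) / fact (m + i) * (ln x ^ i * qq m b (ln x) * (ln x ^ m / x^2)))
     has_integral (\<Sum>i\<le>a. real (a choose i) * (-1)^(a-i) / fact (m + i) * (if i = b then fact b else 0))) {1..}"
    using assms by (intro has_integral_sum has_integral_mult_right J_int) auto
  moreover have "(\<Sum>i\<le>a. real (a choose i) * (-1)^(a-i) / fact (m + i) * (if i = b then fact b else 0))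
      = (if a = b then fact a / fact (m + a) else 0)"
  proof (cases "a = b")
    case True
    then show ?thesis by (simp add: sum.atMost_Suc if_distrib cong: if_cong)
  next
    case False
    have "\<forall>i\<in>{..a}. real (a choose i) * (-1)^(a-i) / fact (m + i) * (if i = b then fact b else 0) = (0::real)"
      using assms False by auto
    then show ?thesis using False by (simp only: sum.neutral) simp
  qed
  ultimately show ?thesis unfolding e by simp
qed

lemma Q_orth:
  "((\<lambda>x. qq m a (ln x) * qq m b (ln x) * (ln x ^ m / x^2)) has_integral
           (if a = b then fact a / fact (m + a) else 0)) {1..}"
proof (cases "a \<le> b")
  case True then show ?thesis by (rule Q_orth_le)
next
  case False
  then have "((\<lambda>x. qq m b (ln x) * qq m a (ln x) * (ln x ^ m / x^2)) has_integral
           (if b = a then fact b / fact (m + b) else 0)) {1..}" by (intro Q_orth_le) auto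
  then show ?thesis using False by (simp add: mult.commute mult.left_commute)
qed



lemma bessel:
  "(\<Sum>n<N. real ((n + m) choose n) * (ell m n)^2)
     \<le> integral {1..} (\<lambda>x::real. frac x ^ 2 * (ln x ^ m / x^2)) / fact m"
proof -
  define F where "F n = fact (m + n) / (fact n :: real)" for n
  define c where "c n = - ell m n * F n" for n
  define J where "J = integral {1..} (\<lambda>x::real. frac x ^ 2 * (ln x ^ m / x^2))"
  define w where "w x = ln x ^ m / x^2" for x :: real
  define P where "P x = (\<Sum>n<N. c n * qq m n (ln x))" for x
  have Fpos: "F n > 0" for n unfolding F_def by simp
  have eq: "(frac x - P x)^2 * w x = frac x ^ 2 * w x
        - 2 * (\<Sum>n<N. c n * (frac x * qq m n (ln x) * w x))
        + (\<Sum>a<N. c a * (\<Sum>b<N. c b * (qq m a (ln x) * qq m b (ln x) * w x)))" for x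
  proof -
    have "(frac x - P x)^2 * w x = frac x ^ 2 * w x - 2 * (frac x * P x * w x) + P x * P x * w x"
      by (simp add: power2_eq_square algebra_simps)
    moreover have "frac x * P x * w x = (\<Sum>n<N. c n * (frac x * qq m n (ln x) * w x))"
      unfolding P_def by (simp add: sum_distrib_left sum_distrib_right algebra_simps)
    moreover have "P x * P x * w x = (\<Sum>a<N. c a * (\<Sum>b<N. c b * (qq m a (ln x) * qq m b (ln x) * w x)))"
      unfolding P_def sum_product by (simp add: sum_distrib_left sum_distrib_right algebra_simps)
    ultimately show ?thesis by simp
  qed
  have I1: "((\<lambda>x. frac x ^ 2 * w x) has_integral J) {1..}"
    unfolding J_def w_def using frac2_wt_integrable by (rule integrable_integral)
  have I2: "((\<lambda>x. \<Sum>n<N. c n * (frac x * qq m n (ln x) * w x)) has_integral (\<Sum>n<N. c n * (- ell m n))) {1..}"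
    unfolding w_def by (intro has_integral_sum has_integral_mult_right g_q) auto
  have I3: "((\<lambda>x. \<Sum>a<N. c a * (\<Sum>b<N. c b * (qq m a (ln x) * qq m b (ln x) * w x))) has_integral
      (\<Sum>a<N. c a * (\<Sum>b<N. c b * (if a = b then fact a / fact (m + a) else 0)))) {1..}"
    unfolding w_def by (intro has_integral_sum has_integral_mult_right Q_orth) auto
  have I: "((\<lambda>x. (frac x - P x)^2 * w x) has_integral
      (J - 2 * (\<Sum>n<N. c n * (- ell m n)) + (\<Sum>a<N. c a * (\<Sum>b<N. c b * (if a = b then fact a / fact (m + a) else 0))))) {1..}"
    unfolding eq by (intro has_integral_add has_integral_diff I1 I3 has_integral_mult_right I2)
  have nn: "0 \<le> J - 2 * (\<Sum>n<N. c n * (- ell m n)) + (\<Sum>a<N. c a * (\<Sum>b<N. c b * (if a = b then fact a / fact (m + a) else 0)))"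
    by (rule has_integral_nonneg[OF I]) (auto simp: w_def)
  have s2: "(\<Sum>a<N. c a * (\<Sum>b<N. c b * (if a = b then fact a / fact (m + a) else 0))) = (\<Sum>n<N. (ell m n)^2 * F n)"
  proof (intro sum.cong refl)
    fix a assume a: "a \<in> {..<N}"
    have "(\<Sum>b<N. c b * (if a = b then fact a / fact (m + a) else 0)) = c a * (fact a / fact (m + a))"
      using a by (simp add: if_distrib cong: if_cong)
    then show "c a * (\<Sum>b<N. c b * (if a = b then fact a / fact (m + a) else 0)) = (ell m a)^2 * F a"
      using Fpos[of a] by (simp add: c_def F_def power2_eq_square field_simps)
  qed
  have s1: "(\<Sum>n<N. c n * (- ell m n)) = (\<Sum>n<N. (ell m n)^2 * F n)"
    by (intro sum.cong refl) (simp add: c_def power2_eq_square)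
  have "(\<Sum>n<N. (ell m n)^2 * F n) \<le> J" using nn unfolding s1 s2 by simp
  moreover have "F n = fact m * real ((n + m) choose n)" for n
    unfolding F_def by (simp add: binomial_fact field_simps add.commute)
  ultimately have "fact m * (\<Sum>n<N. real ((n + m) choose n) * (ell m n)^2) \<le> J"
    by (simp add: sum_distrib_left algebra_simps)
  then show ?thesis unfolding J_def[symmetric] by (simp add: field_simps)
qed



lemma binom_series:
  fixes r :: real assumes "0 \<le> r" "r < 1"
  shows "(\<lambda>n. real ((n + m) choose n) * r ^ n) sums (1 / (1 - r) ^ (m + 1))"
proof -
  have "\<bar>- r\<bar> < 1" using assms by simp
  from gen_binomial_real[OF this, of "- (real m + 1)"]
  have "(\<lambda>n. ((- (real m + 1)) gchoose n) * (- r) ^ n) sums (1 + - r) powr (- (real m + 1))" .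
  moreover have "((- (real m + 1)) gchoose n) * (- r) ^ n = real ((n + m) choose n) * r ^ n" for n
  proof -
    have "((- (real m + 1)) gchoose n) = (-1)^n * ((real m + 1 + of_nat n - 1) gchoose n)"
      by (rule gbinomial_minus)
    also have "(real m + 1 + of_nat n - 1) = of_nat (n + m)" by simp
    also have "(of_nat (n + m) gchoose n) = (of_nat ((n + m) choose n) :: real)"
      by (rule binomial_gbinomial[symmetric])
    finally have g: "((- (real m + 1)) gchoose n) = (-1)^n * real ((n + m) choose n)" .
    have "(-1::real)^n * (- r) ^ n = r ^ n"
      by (simp flip: power_mult_distrib)
    then show ?thesis unfolding g by (metis mult.commute mult.left_commute)
  qed
  moreover have "(1 + - r) powr (- (real m + 1)) = 1 / (1 - r) ^ (m + 1)"
  proof -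
    have "(1 + - r) powr (- (real m + 1)) = inverse ((1 - r) powr real (m + 1))"
    proof -
      have "- (real m + 1) = - real (m + 1)" by simp
      then have "(1 + - r) powr (- (real m + 1)) = (1 - r) powr (- real (m + 1))" by (simp only: diff_conv_add_uminus)
      also have "\<dots> = inverse ((1 - r) powr real (m + 1))" by (rule powr_minus)
      finally show ?thesis .
    qed
    also have "(1 - r) powr real (m + 1) = (1 - r) ^ (m + 1)"
      using assms by (intro powr_realpow) simp
    finally show ?thesis by (simp add: divide_inverse)
  qed
  ultimately show ?thesis by simp
qed

theorem mainTheorem10:
  fixes m :: nat and s :: complex
  assumes "Re s > 1/2"
  shows "summable (\<lambda>n. real ((n + m) choose n) * \<bar>ell m n\<bar> * cmod ((1 - s) / s) ^ n)
    \<and> (\<lambda>x::real. frac x ^ 2 * ln x ^ m / x ^ 2) integrable_on {1..}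
    \<and> (\<Sum>n. real ((n + m) choose n) * \<bar>ell m n\<bar> * cmod ((1 - s) / s) ^ n)
        \<le> sqrt (1 / fact m * integral {1..} (\<lambda>x::real. frac x ^ 2 * ln x ^ m / x ^ 2))
           * (cmod s / sqrt (2 * Re s - 1)) ^ (m + 1)"
proof -
  define z where "z = cmod ((1 - s) / s)"
  define r where "r = z ^ 2"
  define C where "C n = real ((n + m) choose n)" for n
  define J where "J = integral {1..} (\<lambda>x::real. frac x ^ 2 * ln x ^ m / x ^ 2)"
  define A where "A n = C n * (ell m n)^2" for n
  define B where "B n = C n * r ^ n" for n
  define t where "t n = C n * \<bar>ell m n\<bar> * z ^ n" for n
  define T where "T = 1 / (1 - r) ^ (m + 1)"
  have s0: "s \<noteq> 0" using assms by auto
  have spos: "cmod s > 0" using s0 by simp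
  have sig: "2 * Re s - 1 > 0" using assms by simp
  have n1s: "cmod (1 - s) ^ 2 = cmod s ^ 2 - (2 * Re s - 1)"
    unfolding cmod_power2 by (simp add: power2_eq_square algebra_simps)
  have r_eq: "r = cmod (1 - s) ^ 2 / cmod s ^ 2"
    unfolding r_def z_def by (simp add: norm_divide power_divide)
  have one_r: "1 - r = (2 * Re s - 1) / cmod s ^ 2"
    unfolding r_eq n1s using spos by (simp add: field_simps)
  have r0: "0 \<le> r" unfolding r_def by simp
  have "1 - r > 0" unfolding one_r using sig spos by simp
  then have r1: "r < 1" by simp
  have z0: "0 \<le> z" unfolding z_def by simp
  have C0: "0 \<le> C n" for n unfolding C_def by simp
  have Jeq: "J = integral {1..} (\<lambda>x::real. frac x ^ 2 * (ln x ^ m / x^2))"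
    unfolding J_def by simp
  have intJ: "(\<lambda>x::real. frac x ^ 2 * ln x ^ m / x ^ 2) integrable_on {1..}"
    using frac2_wt_integrable[of m] by simp
  have Bsum: "B sums T" unfolding B_def C_def T_def by (rule binom_series[OF r0 r1])
  have A0: "0 \<le> A n" for n unfolding A_def using C0 by simp
  have Apart: "sum A {..<N} \<le> J / fact m" for N
    using bessel[where N=N and m=m] unfolding A_def C_def Jeq by simp
  have Asum: "summable A" by (rule summableI_nonneg_bounded[OF A0 Apart])
  have AJ: "suminf A \<le> J / fact m" by (rule suminf_le_const[OF Asum Apart])
  define a where "a n = sqrt (C n) * \<bar>ell m n\<bar>" for n
  define b where "b n = sqrt (C n) * z ^ n" for n
  have ab: "a n * b n = t n" for n
    unfolding a_def b_def t_def using C0[of n] by (simp add: algebra_simps flip: real_sqrt_mult)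
  have a2: "(a n)^2 = A n" for n unfolding a_def A_def using C0[of n] by (simp add: power_mult_distrib)
  have b2: "(b n)^2 = B n" for n unfolding b_def B_def r_def using C0[of n]
    by (simp add: power_mult_distrib flip: power_mult) (simp add: mult.commute)
  have t0: "0 \<le> t n" for n unfolding t_def using C0 z0 by simp
  have tle: "t n \<le> (A n + B n) / 2" for n
  proof -
    have "0 \<le> (a n - b n)^2" by simp
    then show ?thesis using ab[of n] a2[of n] b2[of n] by (simp add: power2_diff)
  qed
  have tsum: "summable t"
  proof (rule summable_comparison_test[where g = "\<lambda>n. (A n + B n) / 2"])
    show "\<exists>N. \<forall>n\<ge>N. norm (t n) \<le> (A n + B n) / 2" using t0 tle by auto
    show "summable (\<lambda>n. (A n + B n) / 2)"
      using Asum sums_summable[OF Bsum] by (intro summable_divide summable_add)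
  qed
  have Tge: "0 \<le> T" unfolding T_def using r1 by simp
  have part: "sum t {..<N} \<le> sqrt (suminf A * T)" for N
  proof -
    have "(sum t {..<N})^2 = (\<Sum>n<N. a n * b n)^2" using ab by simp
    also have "\<dots> \<le> (\<Sum>n<N. (a n)^2) * (\<Sum>n<N. (b n)^2)" by (rule Cauchy_Schwarz_ineq_sum)
    also have "\<dots> = sum A {..<N} * sum B {..<N}" using a2 b2 by simp
    also have "\<dots> \<le> suminf A * T"
    proof (rule mult_mono)
      show "sum A {..<N} \<le> suminf A" using Asum A0 by (intro sum_le_suminf) auto
      show "sum B {..<N} \<le> T"
        using sum_le_suminf[OF sums_summable[OF Bsum], of "{..<N}"] sums_unique[OF Bsum]
        unfolding B_def using C0 r0 by auto
      show "0 \<le> suminf A" using Asum A0 by (intro suminf_nonneg) auto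
      show "0 \<le> sum B {..<N}" unfolding B_def using C0 r0 by (intro sum_nonneg) auto
    qed
    finally show ?thesis by (rule real_le_rsqrt)
  qed
  have "suminf t \<le> sqrt (suminf A * T)" by (rule suminf_le_const[OF tsum part])
  also have "\<dots> \<le> sqrt (J / fact m * T)"
    using AJ Tge by (intro real_sqrt_le_mono mult_right_mono)
  also have "\<dots> = sqrt (1 / fact m * J) * sqrt T" by (simp only: real_sqrt_mult[symmetric]) (simp add: field_simps)
  also have "sqrt T = (cmod s / sqrt (2 * Re s - 1)) ^ (m + 1)"
  proof -
    have "T = (cmod s ^ 2 / (2 * Re s - 1)) ^ (m + 1)"
      unfolding T_def one_r by (simp add: power_divide)
    then have "sqrt T = sqrt (cmod s ^ 2 / (2 * Re s - 1)) ^ (m + 1)"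
      by (simp only: real_sqrt_power)
    also have "sqrt (cmod s ^ 2 / (2 * Re s - 1)) = cmod s / sqrt (2 * Re s - 1)"
      by (simp add: real_sqrt_divide)
    finally show ?thesis .
  qed
  finally have main: "suminf t \<le> sqrt (1 / fact m * J) * (cmod s / sqrt (2 * Re s - 1)) ^ (m + 1)" .
  have tt: "t = (\<lambda>n. real ((n + m) choose n) * \<bar>ell m n\<bar> * cmod ((1 - s) / s) ^ n)"
    unfolding t_def C_def z_def ..
  show ?thesis using tsum intJ main unfolding tt J_def by blast
qed


end
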